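(* Let $T^{\natural}=(S^{\natural},I^{\natural},R^{\natural},V^{\natural})$ be an infinite-state transition system, $\varphi$ a set of predicates with $V(\varphi)\subseteq V^{\natural}_{int}$, and $T^{\sharp}=(S^{\sharp},I^{\sharp},R^{\sharp},V^{\sharp})$ the partially predicate abstracted transition system defined in the context. For every ACTL formula $f^{\sharp}$ over the variables of $T^{\sharp}$, if $T^{\sharp}\models f^{\sharp}$ then $T^{\natural}\models\gamma(f^{\sharp})$.
   Context: A transition system $T=(S,I,R,V)$ has variables $V=V_{bool}\cup V_{int}$, states $S\subseteq\mathcal{B}^{|V_{bool}|}\times\mathcal{Z}^{|V_{int}|}$, initial states $I\subseteq S$, transition relation $R\subseteq S\times S$; $T\models f$ means every initial state satisfies $f$. ACTL is the universal fragment of CTL. Given predicates $\varphi=\{\varphi_1,\dots,\varphi_n\}$ over integer variables, $V(\varphi)$ is the set of their variables, $\varphi_i'$ their primed (next-state) versions; fresh booleans $b_i,b_i'$ stand for $\varphi_i,\varphi_i'$. $\alpha(s)=\exists V(\varphi).(s\wedge\bigwedge_i(\varphi_i\iff b_i))$; with $CS=\bigwedge_i\big((\bigwedge_{v\in V(\varphi_i)}v'=v)\implies(b_i'\iff b_i)\big)$, $\alpha^{\tau}(r)=\exists V(\varphi).\exists V(\varphi').\big(r\wedge CS\wedge\bigwedge_i(\varphi_i\iff b_i)\wedge\bigwedge_i(\varphi_i'\iff b_i')\big)$. $T^{\sharp}$ has variables $V^{\sharp}=(V^{\natural}\cup\{b_i\})\setminus V(\varphi)$, $S^{\sharp}=\bigcup_{s\in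 S^{\natural}}\alpha(s)$, $I^{\sharp}=\bigcup_{s\in I^{\natural}}\alpha(s)$, $R^{\sharp}=\bigcup_{r\in R^{\natural}}\alpha^{\tau}(r)$. For a state formula $a$ over $V^{\sharp}$, $\gamma(a)=a[\bar\varphi/\bar b]$ (replace each $b_i$ by $\varphi_i$); for a temporal formula $f^{\sharp}$, $\gamma(f^{\sharp})$ is obtained by recursively replacing every atomic subformula $a$ of $f^{\sharp}$ by $\gamma(a)$, keeping the temporal and boolean structure. *)

theory Defs
  imports Main
begin

text \<open>A (concrete) state is a valuation of boolean and integer variables,
  variables being names of type 'v.  Abstract states additionally carry the
  fresh boolean variables b_i, encoded as Inr i.\<close>

type_synonym 'v cstate = "('v \<Rightarrow> bool) \<times> ('v \<Rightarrow> int)"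
type_synonym 'v astate = "(('v + nat) \<Rightarrow> bool) \<times> ('v \<Rightarrow> int)"

text \<open>A predicate over integer variables: its variable set V(phi_i) and its meaning.\<close>
type_synonym 'v pred = "'v set \<times> (('v \<Rightarrow> int) \<Rightarrow> bool)"

record 's ts =
  St :: "'s set"
  Init :: "'s set"
  Rel :: "('s \<times> 's) set"

definition wf_ts :: "'s ts \<Rightarrow> bool" where
  "wf_ts T \<longleftrightarrow> Init T \<subseteq> St T \<and> Rel T \<subseteq> St T \<times> St T"

text \<open>ACTL in negation normal form; atoms are state formulas (given semantically),
  so negated atoms are atoms.\<close>
datatype 's actl =
    Atom "'s \<Rightarrow> bool"
  | Conj "'s actl" "'s actl"
  | Disj "'s actl" "'s actl"
  | AX "'s actl"
  | AU "'s actl" "'s actl"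
  | AR "'s actl" "'s actl"

definition paths :: "('s \<times> 's) set \<Rightarrow> 's \<Rightarrow> (nat \<Rightarrow> 's) set" where
  "paths R s = {\<pi>. \<pi> 0 = s \<and> (\<forall>k. (\<pi> k, \<pi> (Suc k)) \<in> R)}"

fun holds :: "('s \<times> 's) set \<Rightarrow> 's actl \<Rightarrow> 's \<Rightarrow> bool" where
  "holds R (Atom a) s = a s"
| "holds R (Conj f g) s = (holds R f s \<and> holds R g s)"
| "holds R (Disj f g) s = (holds R f s \<or> holds R g s)"
| "holds R (AX f) s = (\<forall>\<pi>\<in>paths R s. holds R f (\<pi> 1))"
| "holds R (AU f g) s = (\<forall>\<pi>\<in>paths R s. \<exists>k. holds R g (\<pi> k) \<and> (\<forall>j<k. holds R f (\<pi> j)))"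
| "holds R (AR f g) s = (\<forall>\<pi>\<in>paths R s. \<forall>k. holds R g (\<pi> k) \<or> (\<exists>j<k. holds R f (\<pi> j)))"

definition models :: "'s ts \<Rightarrow> 's actl \<Rightarrow> bool" (infix "\<Turnstile>" 50) where
  "T \<Turnstile> f \<longleftrightarrow> (\<forall>s\<in>Init T. holds (Rel T) f s)"

fun atoms :: "'s actl \<Rightarrow> ('s \<Rightarrow> bool) set" where
  "atoms (Atom a) = {a}"
| "atoms (Conj f g) = atoms f \<union> atoms g"
| "atoms (Disj f g) = atoms f \<union> atoms g"
| "atoms (AX f) = atoms f"
| "atoms (AU f g) = atoms f \<union> atoms g"
| "atoms (AR f g) = atoms f \<union> atoms g"

fun map_atoms :: "(('s \<Rightarrow> bool) \<Rightarrow> ('t \<Rightarrow> bool)) \<Rightarrow> 's actl \<Rightarrow> 't actl" where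
  "map_atoms h (Atom a) = Atom (h a)"
| "map_atoms h (Conj f g) = Conj (map_atoms h f) (map_atoms h g)"
| "map_atoms h (Disj f g) = Disj (map_atoms h f) (map_atoms h g)"
| "map_atoms h (AX f) = AX (map_atoms h f)"
| "map_atoms h (AU f g) = AU (map_atoms h f) (map_atoms h g)"
| "map_atoms h (AR f g) = AR (map_atoms h f) (map_atoms h g)"

definition Vphi :: "'v pred list \<Rightarrow> 'v set" where
  "Vphi ps = (\<Union>p\<in>set ps. fst p)"

definition pred_wf :: "'v pred \<Rightarrow> bool" where
  "pred_wf p \<longleftrightarrow> (\<forall>\<rho> \<rho>'. (\<forall>v\<in>fst p. \<rho> v = \<rho>' v) \<longrightarrow> snd p \<rho> = snd p \<rho>')"

text \<open>alpha(s): the unique abstract state described by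
  exists V(phi). (s /\ /\_i (phi_i <-> b_i)); the projected-away integer
  variables V(phi) are set to the dummy value 0.\<close>
definition alpha_st :: "'v pred list \<Rightarrow> 'v cstate \<Rightarrow> 'v astate" where
  "alpha_st ps s =
     ((\<lambda>x. case x of Inl v \<Rightarrow> fst s v | Inr i \<Rightarrow> i < length ps \<and> snd (ps ! i) (snd s)),
      (\<lambda>v. if v \<in> Vphi ps then 0 else snd s v))"

text \<open>The constraint CS, evaluated on a concrete transition (s,s') with
  b_i, b_i' the values of phi_i, phi_i'.\<close>
definition CS :: "'v pred list \<Rightarrow> 'v cstate \<Rightarrow> 'v cstate \<Rightarrow> bool" where
  "CS ps s s' \<longleftrightarrow> (\<forall>i<length ps.
      (\<forall>v\<in>fst (ps ! i). snd s' v = snd s v) \<longrightarrow>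
      (fst (alpha_st ps s') (Inr i) \<longleftrightarrow> fst (alpha_st ps s) (Inr i)))"

definition abs_ts :: "'v pred list \<Rightarrow> 'v cstate ts \<Rightarrow> 'v astate ts" where
  "abs_ts ps T =
     \<lparr> St = alpha_st ps ` St T,
       Init = alpha_st ps ` Init T,
       Rel = {(alpha_st ps s, alpha_st ps s') | s s'. (s, s') \<in> Rel T \<and> CS ps s s'} \<rparr>"

text \<open>gamma(a) = a[phi/b]: evaluate the abstract state formula a with b_i := phi_i.\<close>
definition gamma_atom :: "'v pred list \<Rightarrow> ('v astate \<Rightarrow> bool) \<Rightarrow> ('v cstate \<Rightarrow> bool)" where
  "gamma_atom ps a = (\<lambda>s. a (alpha_st ps s))"

definition gamma :: "'v pred list \<Rightarrow> 'v astate actl \<Rightarrow> 'v cstate actl" where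
  "gamma ps f = map_atoms (gamma_atom ps) f"

text \<open>An abstract state formula is over V# = (Vb \<union> {b_i}) plus (Vi - V(phi)).\<close>
definition over_abs_vars :: "'v set \<Rightarrow> 'v set \<Rightarrow> 'v pred list \<Rightarrow> ('v astate \<Rightarrow> bool) \<Rightarrow> bool" where
  "over_abs_vars Vb Vi ps a \<longleftrightarrow>
     (\<forall>x y. (\<forall>v\<in>Inl ` Vb \<union> Inr ` {..<length ps}. fst x v = fst y v) \<longrightarrow>
            (\<forall>v\<in>Vi - Vphi ps. snd x v = snd y v) \<longrightarrow> a x = a y)"

end

theory Submission
  imports Defs
begin

lemma CS_holds:
  assumes "\<forall>p\<in>set ps. pred_wf p"
  shows "CS ps s s'"
  unfolding CS_def alpha_st_def
proof (intro allI impI)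
  fix i assume i: "i < length ps" and h: "\<forall>v\<in>fst (ps ! i). snd s' v = snd s v"
  have "pred_wf (ps ! i)" using assms i by auto
  then have "snd (ps ! i) (snd s') = snd (ps ! i) (snd s)"
    using h unfolding pred_wf_def by metis
  then show "fst ((\<lambda>x. case x of Inl v \<Rightarrow> fst s' v | Inr i \<Rightarrow> i < length ps \<and> snd (ps ! i) (snd s')),
      (\<lambda>v. if v \<in> Vphi ps then 0 else snd s' v)) (Inr i) =
    fst ((\<lambda>x. case x of Inl v \<Rightarrow> fst s v | Inr i \<Rightarrow> i < length ps \<and> snd (ps ! i) (snd s)),
      (\<lambda>v. if v \<in> Vphi ps then 0 else snd s v)) (Inr i)" by simp
qed

lemma path_map:
  assumes "\<forall>p\<in>set ps. pred_wf p" and "\<pi> \<in> paths (Rel T) s"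
  shows "alpha_st ps \<circ> \<pi> \<in> paths (Rel (abs_ts ps T)) (alpha_st ps s)"
proof -
  have "\<And>k. (alpha_st ps (\<pi> k), alpha_st ps (\<pi> (Suc k))) \<in> Rel (abs_ts ps T)"
  proof -
    fix k
    have "(\<pi> k, \<pi> (Suc k)) \<in> Rel T" using assms(2) unfolding paths_def by auto
    then show "(alpha_st ps (\<pi> k), alpha_st ps (\<pi> (Suc k))) \<in> Rel (abs_ts ps T)"
    proof -
      assume r: "(\<pi> k, \<pi> (Suc k)) \<in> Rel T"
      have "CS ps (\<pi> k) (\<pi> (Suc k))" by (rule CS_holds[OF assms(1)])
      with r show ?thesis unfolding abs_ts_def ts.select_convs by blast
    qed
  qed
  then show ?thesis using assms(2) unfolding paths_def by auto
qed

lemma sim: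
  assumes "\<forall>p\<in>set ps. pred_wf p"
  shows "holds (Rel (abs_ts ps T)) f (alpha_st ps s) \<Longrightarrow> holds (Rel T) (gamma ps f) s"
proof (induction f arbitrary: s)
  case (Atom a) then show ?case by (simp add: gamma_def gamma_atom_def)
next
  case (Conj f g) then show ?case by (simp add: gamma_def)
next
  case (Disj f g) then show ?case unfolding gamma_def by (metis holds.simps(3) map_atoms.simps(3))
next
  case (AX f)
  show ?case unfolding gamma_def
  proof (simp, intro ballI)
    fix \<pi> assume p: "\<pi> \<in> paths (Rel T) s"
    have "holds (Rel (abs_ts ps T)) f ((alpha_st ps \<circ> \<pi>) (Suc 0))"
    proof -
      have "\<forall>\<pi>\<in>paths (Rel (abs_ts ps T)) (alpha_st ps s). holds (Rel (abs_ts ps T)) f (\<pi> 1)"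
        using AX.prems by simp
      then show ?thesis using path_map[OF assms p] by (simp del: comp_apply)
    qed
    then show "holds (Rel T) (map_atoms (gamma_atom ps) f) (\<pi> (Suc 0))"
      using AX.IH unfolding gamma_def by simp
  qed
next
  case (AU f g)
  show ?case unfolding gamma_def
  proof (simp, intro ballI)
    fix \<pi> assume p: "\<pi> \<in> paths (Rel T) s"
    obtain k where k1: "holds (Rel (abs_ts ps T)) g ((alpha_st ps \<circ> \<pi>) k)"
      and k2: "\<forall>j<k. holds (Rel (abs_ts ps T)) f ((alpha_st ps \<circ> \<pi>) j)"
      using AU.prems path_map[OF assms p] by fastforce
    have "holds (Rel T) (gamma ps g) (\<pi> k)" using AU.IH(2) k1 by simp
    moreover have "\<forall>j<k. holds (Rel T) (gamma ps f) (\<pi> j)" using AU.IH(1) k2 by simp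
    ultimately show "\<exists>k. holds (Rel T) (map_atoms (gamma_atom ps) g) (\<pi> k) \<and>
               (\<forall>j<k. holds (Rel T) (map_atoms (gamma_atom ps) f) (\<pi> j))"
      unfolding gamma_def by blast
  qed
next
  case (AR f g)
  show ?case unfolding gamma_def
  proof (simp, intro ballI allI)
    fix \<pi> k assume p: "\<pi> \<in> paths (Rel T) s"
    have "holds (Rel (abs_ts ps T)) g ((alpha_st ps \<circ> \<pi>) k) \<or>
      (\<exists>j<k. holds (Rel (abs_ts ps T)) f ((alpha_st ps \<circ> \<pi>) j))"
      using AR.prems path_map[OF assms p] by (simp del: comp_apply)
    then have "holds (Rel T) (gamma ps g) (\<pi> k) \<or>
               (\<exists>j<k. holds (Rel T) (gamma ps f) (\<pi> j))"
    proof (elim disjE exE conjE)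
      assume "holds (Rel (abs_ts ps T)) g ((alpha_st ps \<circ> \<pi>) k)"
      then show ?thesis using AR.IH(2) by simp
    next
      fix j assume "j < k" "holds (Rel (abs_ts ps T)) f ((alpha_st ps \<circ> \<pi>) j)"
      then show ?thesis using AR.IH(1)[of "\<pi> j"] by auto
    qed
    then show "holds (Rel T) (map_atoms (gamma_atom ps) g) (\<pi> k) \<or>
               (\<exists>j<k. holds (Rel T) (map_atoms (gamma_atom ps) f) (\<pi> j))"
      unfolding gamma_def by blast
  qed
qed

theorem lemma7:
  fixes T :: "'v cstate ts" and Vb Vi :: "'v set" and ps :: "'v pred list"
    and f :: "'v astate actl"
  assumes "wf_ts T"
    and "Vb \<inter> Vi = {}"
    and "Vphi ps \<subseteq> Vi"
    and "\<forall>p\<in>set ps. pred_wf p"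
    and "\<forall>a\<in>atoms f. over_abs_vars Vb Vi ps a"
    and "abs_ts ps T \<Turnstile> f"
  shows "T \<Turnstile> gamma ps f"
  using assms(6) sim[OF assms(4)] unfolding models_def abs_ts_def by auto

end
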